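(* Every mean-variance team stochastic game as described in the context has a deterministic joint policy $\boldsymbol{\mu}^*\in\mathcal{D}$ (i.e. each $\mu_i^*$ maps $\mathcal{S}$ to $\mathcal{A}_i$) such that $J(\boldsymbol{\mu}^* )=\max_{\boldsymbol{\mu}\in\mathcal{U}}J(\boldsymbol{\mu})$; in particular $\boldsymbol{\mu}^*$ is a Nash equilibrium, i.e. $J(\mu_i^*,\boldsymbol{\mu}_{-i}^* )\ge J(\mu_i,\boldsymbol{\mu}^*_{-i})$ for all $i\in\mathcal{N}$ and all $\mu_i\in\mathcal{U}_i$.
   Context: A team stochastic game consists of a finite set of agents $\mathcal{N}=\{1,\dots,N\}$, a finite state space $\mathcal{S}$, finite action sets $\mathcal{A}_i$ with joint action set $\mathcal{A}=\prod_i\mathcal{A}_i$, a transition kernel $P(s'|s,\boldsymbol{a})$ and a common reward $r:\mathcal{S}\times\mathcal{A}\to\mathbb{R}$. A policy of agent $i$ is $\mu_i:\mathcal{S}\to\Delta(\mathcal{A}_i)$ (set $\mathcal{U}_i$); a joint policy $\boldsymbol{\mu}=(\mu_1,\dots,\mu_N)\in\mathcal{U}=\prod_i\mathcal{U}_i$ selects $\boldsymbol{a}$ in state $s$ with probability $\prod_i\mu_i(a_i|s)$; $\mathcal{D}\subset\mathcal{U}$ is the set of deterministic joint policies. $(\mu_i,\boldsymbol{\mu}_{-i})$ denotes the joint policy in which agent $i$ uses $\mu_i$ and the others use $\boldsymbol{\mu}_{-i}$. Standing assumption: the Markov chain $P^{\boldsymbol{\mu}}(s'|s)=\sum_{\boldsymbol{a}}\boldsymbol{\mu}(\boldsymbol{a}|s)P(s'|s,\boldsymbol{a})$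 is ergodic for every $\boldsymbol{\mu}\in\mathcal{U}$, with stationary distribution $\pi^{\boldsymbol{\mu}}$. Define $\eta^{\boldsymbol{\mu}}=\sum_s\pi^{\boldsymbol{\mu}}(s)\sum_{\boldsymbol{a}}\boldsymbol{\mu}(\boldsymbol{a}|s)r(s,\boldsymbol{a})$ (long-run average reward), $\zeta^{\boldsymbol{\mu}}=\sum_s\pi^{\boldsymbol{\mu}}(s)\sum_{\boldsymbol{a}}\boldsymbol{\mu}(\boldsymbol{a}|s)(r(s,\boldsymbol{a})-\eta^{\boldsymbol{\mu}})^2$ (long-run variance), and for a fixed $\beta\ge0$, $J(\boldsymbol{\mu})=\eta^{\boldsymbol{\mu}}-\beta\zeta^{\boldsymbol{\mu}}$. *)

theory Defs
  imports Main "HOL-Library.Function_Algebras" Complex_Main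
begin

definition joint_actions :: "('i \<Rightarrow> 'a set) \<Rightarrow> ('i \<Rightarrow> 'a) set" where
  "joint_actions A = {a. \<forall>i. a i \<in> A i}"

definition is_policy :: "'a set \<Rightarrow> ('s \<Rightarrow> 'a \<Rightarrow> real) \<Rightarrow> bool" where
  "is_policy Ai m \<longleftrightarrow>
     (\<forall>s. (\<forall>a. 0 \<le> m s a) \<and> (\<forall>a. a \<notin> Ai \<longrightarrow> m s a = 0) \<and> (\<Sum>a\<in>Ai. m s a) = 1)"

definition joint_policies :: "('i \<Rightarrow> 'a set) \<Rightarrow> ('i \<Rightarrow> 's \<Rightarrow> 'a \<Rightarrow> real) set" where
  "joint_policies A = {mu. \<forall>i. is_policy (A i) (mu i)}"

definition deterministic_policies :: "('i \<Rightarrow> 'a set) \<Rightarrow> ('i \<Rightarrow> 's \<Rightarrow> 'a \<Rightarrow> real) set" where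
  "deterministic_policies A = {mu. \<exists>d :: 'i \<Rightarrow> 's \<Rightarrow> 'a. (\<forall>i s. d i s \<in> A i) \<and>
       (\<forall>i s a. mu i s a = (if a = d i s then 1 else 0))}"

definition joint_prob :: "('i::finite \<Rightarrow> 's \<Rightarrow> 'a \<Rightarrow> real) \<Rightarrow> 's \<Rightarrow> ('i \<Rightarrow> 'a) \<Rightarrow> real" where
  "joint_prob mu s a = (\<Prod>i\<in>UNIV. mu i s (a i))"

definition chain :: "('i \<Rightarrow> 'a set) \<Rightarrow> ('s \<Rightarrow> ('i \<Rightarrow> 'a) \<Rightarrow> 's \<Rightarrow> real)
     \<Rightarrow> ('i::finite \<Rightarrow> 's \<Rightarrow> 'a \<Rightarrow> real) \<Rightarrow> 's \<Rightarrow> 's \<Rightarrow> real" where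
  "chain A P mu s s' = (\<Sum>a\<in>joint_actions A. joint_prob mu s a * P s a s')"

fun mpow :: "('s::finite \<Rightarrow> 's \<Rightarrow> real) \<Rightarrow> nat \<Rightarrow> 's \<Rightarrow> 's \<Rightarrow> real" where
  "mpow Q 0 s s' = (if s = s' then 1 else 0)"
| "mpow Q (Suc k) s s' = (\<Sum>t\<in>UNIV. mpow Q k s t * Q t s')"

definition irreducible_chain :: "('s::finite \<Rightarrow> 's \<Rightarrow> real) \<Rightarrow> bool" where
  "irreducible_chain Q \<longleftrightarrow> (\<forall>s s'. \<exists>k>0. mpow Q k s s' > 0)"

definition aperiodic_chain :: "('s::finite \<Rightarrow> 's \<Rightarrow> real) \<Rightarrow> bool" where
  "aperiodic_chain Q \<longleftrightarrow> (\<forall>s. Gcd {k. k > 0 \<and> mpow Q k s s > 0} = 1)"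

definition ergodic_chain :: "('s::finite \<Rightarrow> 's \<Rightarrow> real) \<Rightarrow> bool" where
  "ergodic_chain Q \<longleftrightarrow> irreducible_chain Q \<and> aperiodic_chain Q"

definition is_stationary :: "('s::finite \<Rightarrow> 's \<Rightarrow> real) \<Rightarrow> ('s \<Rightarrow> real) \<Rightarrow> bool" where
  "is_stationary Q p \<longleftrightarrow> (\<forall>s. 0 \<le> p s) \<and> (\<Sum>s\<in>UNIV. p s) = 1 \<and>
      (\<forall>s'. p s' = (\<Sum>s\<in>UNIV. p s * Q s s'))"

text \<open>The (unique, under ergodicity) stationary distribution.\<close>
definition stat_dist :: "('s::finite \<Rightarrow> 's \<Rightarrow> real) \<Rightarrow> 's \<Rightarrow> real" where
  "stat_dist Q = (THE p. is_stationary Q p)"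

definition avg_reward :: "('i \<Rightarrow> 'a set) \<Rightarrow> ('s::finite \<Rightarrow> ('i \<Rightarrow> 'a) \<Rightarrow> 's \<Rightarrow> real)
    \<Rightarrow> ('s \<Rightarrow> ('i \<Rightarrow> 'a) \<Rightarrow> real) \<Rightarrow> ('i::finite \<Rightarrow> 's \<Rightarrow> 'a \<Rightarrow> real) \<Rightarrow> real" where
  "avg_reward A P r mu = (\<Sum>s\<in>UNIV. stat_dist (chain A P mu) s *
      (\<Sum>a\<in>joint_actions A. joint_prob mu s a * r s a))"

definition avg_variance :: "('i \<Rightarrow> 'a set) \<Rightarrow> ('s::finite \<Rightarrow> ('i \<Rightarrow> 'a) \<Rightarrow> 's \<Rightarrow> real)
    \<Rightarrow> ('s \<Rightarrow> ('i \<Rightarrow> 'a) \<Rightarrow> real) \<Rightarrow> ('i::finite \<Rightarrow> 's \<Rightarrow> 'a \<Rightarrow> real) \<Rightarrow> real" where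
  "avg_variance A P r mu = (\<Sum>s\<in>UNIV. stat_dist (chain A P mu) s *
      (\<Sum>a\<in>joint_actions A. joint_prob mu s a * (r s a - avg_reward A P r mu)\<^sup>2))"

definition mv_objective :: "real \<Rightarrow> ('i \<Rightarrow> 'a set) \<Rightarrow> ('s::finite \<Rightarrow> ('i \<Rightarrow> 'a) \<Rightarrow> 's \<Rightarrow> real)
    \<Rightarrow> ('s \<Rightarrow> ('i \<Rightarrow> 'a) \<Rightarrow> real) \<Rightarrow> ('i::finite \<Rightarrow> 's \<Rightarrow> 'a \<Rightarrow> real) \<Rightarrow> real" where
  "mv_objective beta A P r mu = avg_reward A P r mu - beta * avg_variance A P r mu"

end

theory Submission
  imports Defs "HOL-Analysis.Analysis"
begin

definition stoch :: "('s::finite \<Rightarrow> 's \<Rightarrow> real) \<Rightarrow> bool" where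
  "stoch Q \<longleftrightarrow> (\<forall>s s'. 0 \<le> Q s s') \<and> (\<forall>s. (\<Sum>s'\<in>UNIV. Q s s') = 1)"

lemma mpow_nonneg: "stoch Q \<Longrightarrow> 0 \<le> mpow Q k s s'"
  by (induction k arbitrary: s') (auto simp: stoch_def intro!: sum_nonneg)

lemma mpow_sum1: "stoch Q \<Longrightarrow> (\<Sum>s'\<in>UNIV. mpow Q k s s') = 1"
proof (induction k)
  case 0 then show ?case by simp
next
  case (Suc k)
  have "(\<Sum>s'\<in>UNIV. mpow Q (Suc k) s s') = (\<Sum>t\<in>UNIV. mpow Q k s t * (\<Sum>s'\<in>UNIV. Q t s'))"
  proof -
    have "(\<Sum>s'\<in>UNIV. mpow Q (Suc k) s s') = (\<Sum>s'\<in>UNIV. \<Sum>t\<in>UNIV. mpow Q k s t * Q t s')" by simp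
    also have "\<dots> = (\<Sum>t\<in>UNIV. \<Sum>s'\<in>UNIV. mpow Q k s t * Q t s')" by (rule sum.swap)
    also have "\<dots> = (\<Sum>t\<in>UNIV. mpow Q k s t * (\<Sum>s'\<in>UNIV. Q t s'))" by (simp add: sum_distrib_left)
    finally show ?thesis .
  qed
  also have "\<dots> = 1" using Suc by (simp add: stoch_def)
  finally show ?case .
qed

lemma stationary_mpow:
  assumes "\<forall>s'. p s' = (\<Sum>s\<in>UNIV. p s * Q s s')"
  shows "p s' = (\<Sum>s\<in>UNIV. p s * mpow Q k s s')"
proof (induction k arbitrary: s')
  case 0
  have "(\<Sum>s\<in>UNIV. p s * mpow Q 0 s s') = (\<Sum>s\<in>UNIV. if s = s' then p s else 0)"
    by (rule sum.cong) auto
  then show ?case by simp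
next
  case (Suc k)
  have "(\<Sum>s\<in>UNIV. p s * mpow Q (Suc k) s s') = (\<Sum>s\<in>UNIV. \<Sum>t\<in>UNIV. p s * (mpow Q k s t * Q t s'))"
    by (simp add: sum_distrib_left)
  also have "\<dots> = (\<Sum>t\<in>UNIV. \<Sum>s\<in>UNIV. p s * (mpow Q k s t * Q t s'))" by (rule sum.swap)
  also have "\<dots> = (\<Sum>t\<in>UNIV. (\<Sum>s\<in>UNIV. p s * mpow Q k s t) * Q t s')"
    by (simp add: sum_distrib_right mult.assoc)
  also have "\<dots> = (\<Sum>t\<in>UNIV. p t * Q t s')" by (simp add: Suc[symmetric])
  also have "\<dots> = p s'" using assms by metis
  finally show ?case by simp
qed

lemma harmonic_mpow:
  assumes "\<forall>s. h s = (\<Sum>s'\<in>UNIV. Q s s' * h s')"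
  shows "h s = (\<Sum>s'\<in>UNIV. mpow Q k s s' * h s')"
proof (induction k arbitrary: s)
  case 0
  have "(\<Sum>s'\<in>UNIV. mpow Q 0 s s' * h s') = (\<Sum>s'\<in>UNIV. if s = s' then h s' else 0)"
    by (rule sum.cong) auto
  then show ?case by simp
next
  case (Suc k)
  have "(\<Sum>s'\<in>UNIV. mpow Q (Suc k) s s' * h s') = (\<Sum>s'\<in>UNIV. \<Sum>t\<in>UNIV. mpow Q k s t * (Q t s' * h s'))"
    by (simp add: sum_distrib_right mult.assoc)
  also have "\<dots> = (\<Sum>t\<in>UNIV. \<Sum>s'\<in>UNIV. mpow Q k s t * (Q t s' * h s'))" by (rule sum.swap)
  also have "\<dots> = (\<Sum>t\<in>UNIV. mpow Q k s t * (\<Sum>s'\<in>UNIV. Q t s' * h s'))"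
    by (simp add: sum_distrib_left)
  also have "\<dots> = (\<Sum>t\<in>UNIV. mpow Q k s t * h t)" by (simp add: assms[rule_format, symmetric])
  also have "\<dots> = h s" by (simp add: Suc[symmetric])
  finally show ?case by simp
qed

lemma harmonic_const:
  assumes st: "stoch Q" and irr: "irreducible_chain Q"
    and hh: "\<forall>s. h s = (\<Sum>s'\<in>UNIV. Q s s' * h s')"
  shows "h s = h s'"
proof -
  have ex: "\<exists>s0. \<forall>s. h s \<le> h s0"
  proof -
    have "Max (range h) \<in> range h" by (rule Max_in) auto
    then obtain s0 where s0: "h s0 = Max (range h)" by (metis rangeE)
    have "h s \<le> h s0" for s unfolding s0 by (rule Max_ge) auto
    then show ?thesis by blast
  qed
  then obtain s0 where s0: "\<And>s. h s \<le> h s0" by blast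
  have eq: "h x = h s0" for x
  proof -
    obtain k where "k > 0" and pos: "mpow Q k s0 x > 0" using irr unfolding irreducible_chain_def by blast
    have "h s0 = (\<Sum>s'\<in>UNIV. mpow Q k s0 s' * h s')" using harmonic_mpow[OF hh] .
    moreover have "h s0 = (\<Sum>s'\<in>UNIV. mpow Q k s0 s' * h s0)"
      using mpow_sum1[OF st, of k s0] by (simp add: sum_distrib_right[symmetric])
    ultimately have "(\<Sum>s'\<in>UNIV. mpow Q k s0 s' * (h s0 - h s')) = 0"
      by (simp add: right_diff_distrib sum_subtractf)
    moreover have "\<forall>s'\<in>UNIV. 0 \<le> mpow Q k s0 s' * (h s0 - h s')"
      using mpow_nonneg[OF st] s0 by simp
    ultimately have "mpow Q k s0 x * (h s0 - h x) = 0"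
      using sum_nonneg_eq_0_iff[of UNIV "\<lambda>s'. mpow Q k s0 s' * (h s0 - h s')"] by simp
    then show ?thesis using pos by simp
  qed
  show ?thesis using eq[of s] eq[of s'] by simp
qed

lemma stat_nonneg: "is_stationary Q p \<Longrightarrow> 0 \<le> p s"
  unfolding is_stationary_def by blast
lemma stat_sum: "is_stationary Q p \<Longrightarrow> (\<Sum>s\<in>UNIV. p s) = 1"
  unfolding is_stationary_def by blast
lemma stat_eq: "is_stationary Q p \<Longrightarrow> \<forall>s'. p s' = (\<Sum>s\<in>UNIV. p s * Q s s')"
  unfolding is_stationary_def by blast

lemma stationary_pos:
  assumes st: "stoch Q" and irr: "irreducible_chain Q" and p: "is_stationary Q p"
  shows "p s > 0"
proof -
  have "\<exists>s0. p s0 \<noteq> 0"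
  proof (rule ccontr)
    assume "\<not> ?thesis" then have "(\<Sum>s\<in>UNIV. p s) = 0" by simp
    then show False using stat_sum[OF p] by simp
  qed
  then obtain s0 where s0: "p s0 > 0" using stat_nonneg[OF p]
    by (metis order_le_less)
  obtain k where pos: "mpow Q k s0 s > 0" using irr unfolding irreducible_chain_def by blast
  have "p s = (\<Sum>t\<in>UNIV. p t * mpow Q k t s)"
    using stationary_mpow[OF stat_eq[OF p]] by blast
  also have "\<dots> \<ge> p s0 * mpow Q k s0 s"
    by (rule member_le_sum) (use stat_nonneg[OF p] mpow_nonneg[OF st] in auto)
  finally show ?thesis using s0 pos mult_pos_pos[of "p s0" "mpow Q k s0 s"] by linarith
qed

lemma stationary_unique:
  assumes st: "stoch Q" and irr: "irreducible_chain Q"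
    and p: "is_stationary Q p" and q: "is_stationary Q q"
  shows "p = q"
proof -
  have qpos: "\<And>s. q s > 0" using stationary_pos[OF st irr q] .
  define c where "c = Min (range (\<lambda>s. p s / q s))"
  have "c \<in> range (\<lambda>s. p s / q s)" unfolding c_def by (rule Min_in) auto
  then obtain s0 where s0: "c = p s0 / q s0" by (metis (no_types, lifting) rangeE)
  have cle: "c \<le> p s / q s" for s unfolding c_def by (rule Min_le) auto
  define w where "w s = p s - c * q s" for s
  have wnn: "w s \<ge> 0" for s using cle[of s] qpos[of s] by (simp add: w_def field_simps)
  have w0: "w s0 = 0" using s0 qpos[of s0] by (simp add: w_def)
  have wst: "\<forall>s'. w s' = (\<Sum>s\<in>UNIV. w s * Q s s')"
  proof
    fix s'
    have "(\<Sum>s\<in>UNIV. w s * Q s s') = (\<Sum>s\<in>UNIV. p s * Q s s') - c * (\<Sum>s\<in>UNIV. q s * Q s s')"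
      by (simp add: w_def left_diff_distrib sum_subtractf sum_distrib_left mult.assoc)
    also have "\<dots> = p s' - c * q s'" using stat_eq[OF p] stat_eq[OF q] by metis
    finally show "w s' = (\<Sum>s\<in>UNIV. w s * Q s s')" by (simp add: w_def)
  qed
  have wz: "w s = 0" for s
  proof -
    obtain k where pos: "mpow Q k s s0 > 0" using irr unfolding irreducible_chain_def by blast
    have "0 = (\<Sum>t\<in>UNIV. w t * mpow Q k t s0)" using stationary_mpow[OF wst, of s0 k] w0 by simp
    moreover have "\<forall>t\<in>UNIV. 0 \<le> w t * mpow Q k t s0" using wnn mpow_nonneg[OF st] by simp
    ultimately have "w s * mpow Q k s s0 = 0"
      using sum_nonneg_eq_0_iff[of UNIV "\<lambda>t. w t * mpow Q k t s0"] by simp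
    then show ?thesis using pos by simp
  qed
  then have pcq: "p s = c * q s" for s by (simp add: w_def)
  then have "(\<Sum>s\<in>UNIV. p s) = c * (\<Sum>s\<in>UNIV. q s)" by (simp add: sum_distrib_left)
  then have "c = 1" using stat_sum[OF p] stat_sum[OF q] by simp
  then show ?thesis using pcq by auto
qed

lemma stationary_exists:
  fixes Q :: "'s::finite \<Rightarrow> 's \<Rightarrow> real"
  assumes st: "stoch Q"
  shows "\<exists>p. is_stationary Q p"
proof -
  define T :: "real^'s \<Rightarrow> real^'s" where "T v = (\<chi> s'. v$s' - (\<Sum>s\<in>UNIV. v$s * Q s s'))" for v
  have lin: "linear T"
  proof (rule linearI)
    fix x y :: "real^'s"
    show "T (x + y) = T x + T y"
      by (simp add: T_def vec_eq_iff sum.distrib distrib_right)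
  next
    fix c :: real and x :: "real^'s"
    have "(\<Sum>s\<in>UNIV. c * x$s * Q s s') = c * (\<Sum>s\<in>UNIV. x$s * Q s s')" for s'
      by (simp add: sum_distrib_left mult.assoc)
    then show "T (c *\<^sub>R x) = c *\<^sub>R T x"
      by (simp add: T_def vec_eq_iff right_diff_distrib)
  qed
  have sumT: "(\<Sum>s'\<in>UNIV. T v $ s') = 0" for v
  proof -
    have "(\<Sum>s'\<in>UNIV. \<Sum>s\<in>UNIV. v$s * Q s s') = (\<Sum>s\<in>UNIV. \<Sum>s'\<in>UNIV. v$s * Q s s')" by (rule sum.swap)
    also have "\<dots> = (\<Sum>s\<in>UNIV. v$s * (\<Sum>s'\<in>UNIV. Q s s'))" by (simp add: sum_distrib_left)
    also have "\<dots> = (\<Sum>s\<in>UNIV. v$s)" using st by (simp add: stoch_def)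
    finally show ?thesis by (simp add: T_def sum_subtractf)
  qed
  have "\<not> surj T"
  proof
    assume "surj T"
    have "\<exists>v. (\<chi> s. 1) = T v" by (rule surjD[OF \<open>surj T\<close>])
    then obtain v where "(\<chi> s. 1) = T v" by blast
    then have "T v = (\<chi> s. 1)" by simp
    then have "(\<Sum>s'\<in>UNIV. T v $ s') = real CARD('s)" by simp
    then show False using sumT[of v] by simp
  qed
  then have "\<not> inj T" using linear_injective_imp_surjective[OF lin] by blast
  then obtain v where Tv: "T v = 0" and vnz: "v \<noteq> 0" using linear_injective_0[OF lin] by blast
  define w where "w s = \<bar>v$s\<bar>" for s
  have veq: "v$s' = (\<Sum>s\<in>UNIV. v$s * Q s s')" for s'
  proof -
    have "(T v)$s' = 0" using Tv by simp
    then have "v$s' - (\<Sum>s\<in>UNIV. v$s * Q s s') = 0" unfolding T_def by (simp only: vec_lambda_beta)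
    then show ?thesis by linarith
  qed
  have wle: "w s' \<le> (\<Sum>s\<in>UNIV. w s * Q s s')" for s'
  proof -
    have "w s' = \<bar>\<Sum>s\<in>UNIV. v$s * Q s s'\<bar>" unfolding w_def by (rule arg_cong[where f=abs, OF veq])
    also have "\<dots> \<le> (\<Sum>s\<in>UNIV. \<bar>v$s * Q s s'\<bar>)" by (rule sum_abs)
    also have "\<dots> = (\<Sum>s\<in>UNIV. w s * Q s s')" using st by (simp add: w_def abs_mult stoch_def)
    finally show ?thesis .
  qed
  have wsum: "(\<Sum>s'\<in>UNIV. \<Sum>s\<in>UNIV. w s * Q s s') = (\<Sum>s\<in>UNIV. w s)"
  proof -
    have "(\<Sum>s'\<in>UNIV. \<Sum>s\<in>UNIV. w s * Q s s') = (\<Sum>s\<in>UNIV. \<Sum>s'\<in>UNIV. w s * Q s s')" by (rule sum.swap)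
    also have "\<dots> = (\<Sum>s\<in>UNIV. w s * (\<Sum>s'\<in>UNIV. Q s s'))" by (simp add: sum_distrib_left)
    also have "\<dots> = (\<Sum>s\<in>UNIV. w s)" using st by (simp add: stoch_def)
    finally show ?thesis .
  qed
  have "(\<Sum>s'\<in>UNIV. (\<Sum>s\<in>UNIV. w s * Q s s') - w s') = 0"
    using wsum by (simp add: sum_subtractf)
  then have weq: "w s' = (\<Sum>s\<in>UNIV. w s * Q s s')" for s'
    using sum_nonneg_eq_0_iff[of UNIV "\<lambda>s'. (\<Sum>s\<in>UNIV. w s * Q s s') - w s'"] wle by simp
  obtain s1 where "v$s1 \<noteq> 0" using vnz by (metis vec_eq_iff zero_index)
  then have "0 < w s1" by (simp add: w_def)
  also have "w s1 \<le> (\<Sum>s\<in>UNIV. w s)" by (rule member_le_sum) (auto simp: w_def)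
  finally have wpos: "0 < (\<Sum>s\<in>UNIV. w s)" .
  define p where "p s = w s / (\<Sum>s\<in>UNIV. w s)" for s
  have "is_stationary Q p"
    unfolding is_stationary_def
  proof (intro conjI allI)
    fix s show "0 \<le> p s" using wpos by (simp add: p_def w_def)
  next
    show "(\<Sum>s\<in>UNIV. p s) = 1" using wpos by (simp add: p_def sum_divide_distrib[symmetric])
  next
    fix s' show "p s' = (\<Sum>s\<in>UNIV. p s * Q s s')"
      unfolding p_def using weq[of s'] by (simp add: sum_divide_distrib[symmetric])
  qed
  then show ?thesis by blast
qed

lemma stat_dist_ok:
  assumes "stoch Q" "irreducible_chain Q"
  shows "is_stationary Q (stat_dist Q)"
proof -
  obtain p where p: "is_stationary Q p" using stationary_exists[OF assms(1)] by blast
  have "stat_dist Q = p" unfolding stat_dist_def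
    using p stationary_unique[OF assms] by (metis the_equality)
  then show ?thesis using p by simp
qed

lemma poisson:
  fixes Q :: "'s::finite \<Rightarrow> 's \<Rightarrow> real"
  assumes st: "stoch Q" and irr: "irreducible_chain Q" and p: "is_stationary Q p"
    and y: "(\<Sum>s\<in>UNIV. p s * y s) = 0"
  shows "\<exists>h. \<forall>s. h s = y s + (\<Sum>s'\<in>UNIV. Q s s' * h s')"
proof -
  define M :: "real^'s \<Rightarrow> real^'s" where
    "M v = (\<chi> s. v$s - (\<Sum>s'\<in>UNIV. Q s s' * v$s') + (\<Sum>t\<in>UNIV. p t * v$t))" for v
  have lin: "linear M"
    by (rule linearI) (auto simp: M_def vec_eq_iff sum.distrib algebra_simps sum_distrib_left)
  have pM: "(\<Sum>s\<in>UNIV. p s * M v $ s) = (\<Sum>t\<in>UNIV. p t * v$t)" for v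
  proof -
    have sw: "(\<Sum>s\<in>UNIV. p s * (\<Sum>s'\<in>UNIV. Q s s' * v$s')) = (\<Sum>s'\<in>UNIV. p s' * v$s')"
    proof -
      have "(\<Sum>s\<in>UNIV. p s * (\<Sum>s'\<in>UNIV. Q s s' * v$s')) = (\<Sum>s\<in>UNIV. \<Sum>s'\<in>UNIV. p s * Q s s' * v$s')"
        by (simp add: sum_distrib_left mult.assoc)
      also have "\<dots> = (\<Sum>s'\<in>UNIV. \<Sum>s\<in>UNIV. p s * Q s s' * v$s')" by (rule sum.swap)
      also have "\<dots> = (\<Sum>s'\<in>UNIV. (\<Sum>s\<in>UNIV. p s * Q s s') * v$s')" by (simp add: sum_distrib_right)
      also have "\<dots> = (\<Sum>s'\<in>UNIV. p s' * v$s')" using stat_eq[OF p] by metis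
      finally show ?thesis .
    qed
    define K where "K = (\<Sum>t\<in>UNIV. p t * v$t)"
    define B where "B s = (\<Sum>s'\<in>UNIV. Q s s' * v$s')" for s
    have "(\<Sum>s\<in>UNIV. p s * M v $ s) = (\<Sum>s\<in>UNIV. p s * v$s - p s * B s + p s * K)"
      by (rule sum.cong) (simp_all add: M_def B_def K_def algebra_simps)
    also have "\<dots> = (\<Sum>s\<in>UNIV. p s * v$s) - (\<Sum>s\<in>UNIV. p s * B s) + (\<Sum>s\<in>UNIV. p s) * K"
      by (simp add: sum.distrib sum_subtractf sum_distrib_right)
    also have "\<dots> = (\<Sum>t\<in>UNIV. p t * v$t)" using sw stat_sum[OF p] by (simp add: B_def K_def)
    finally show ?thesis .
  qed
  have "inj M"
    unfolding linear_injective_0[OF lin]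
  proof (intro allI impI)
    fix v assume Mv: "M v = 0"
    have z: "(\<Sum>t\<in>UNIV. p t * v$t) = 0" using pM[of v] Mv by simp
    have harm: "\<forall>s. v$s = (\<Sum>s'\<in>UNIV. Q s s' * v$s')"
    proof
      fix s show "v$s = (\<Sum>s'\<in>UNIV. Q s s' * v$s')"
        using arg_cong[OF Mv, of "\<lambda>x. x $ s"] z by (simp add: M_def)
    qed
    obtain s0 :: 's where True by blast
    have const: "v$s = v$s0" for s using harmonic_const[OF st irr harm, of s s0] by simp
    have "(\<Sum>t\<in>UNIV. p t * v$t) = (\<Sum>t\<in>UNIV. p t * v$s0)"
      by (rule sum.cong) (rule refl, metis const)
    also have "\<dots> = v$s0 * (\<Sum>t\<in>UNIV. p t)" by (simp add: mult.commute[of _ "v$s0"] sum_distrib_left)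
    finally have "(\<Sum>t\<in>UNIV. p t * v$t) = v$s0 * (\<Sum>t\<in>UNIV. p t)" .
    then have "v$s0 = 0" using z stat_sum[OF p] by simp
    then have "v$s = 0" for s using const[of s] by simp
    then show "v = 0" by (simp add: vec_eq_iff)
  qed
  then have "surj M" using linear_injective_imp_surjective[OF lin] by blast
  have "\<exists>v. (\<chi> s. y s) = M v" by (rule surjD[OF \<open>surj M\<close>])
  then obtain v where "(\<chi> s. y s) = M v" by blast
  then have Mv: "M v = (\<chi> s. y s)" by simp
  have z: "(\<Sum>t\<in>UNIV. p t * v$t) = 0" using pM[of v] Mv y by simp
  have "\<forall>s. v$s = y s + (\<Sum>s'\<in>UNIV. Q s s' * v$s')"
  proof
    fix s show "v$s = y s + (\<Sum>s'\<in>UNIV. Q s s' * v$s')"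
      using arg_cong[OF Mv, of "\<lambda>x. x $ s"] z by (simp add: M_def)
  qed
  then show ?thesis by blast
qed


lemma joint_actions_PiE: "joint_actions A = Pi\<^sub>E UNIV A"
  by (auto simp: joint_actions_def PiE_def extensional_def Pi_def)

definition Gv :: "('i \<Rightarrow> 'a set) \<Rightarrow> ('s::finite \<Rightarrow> ('i \<Rightarrow> 'a) \<Rightarrow> 's \<Rightarrow> real)
    \<Rightarrow> ('i::finite \<Rightarrow> 's \<Rightarrow> 'a \<Rightarrow> real) \<Rightarrow> ('s \<Rightarrow> ('i \<Rightarrow> 'a) \<Rightarrow> real) \<Rightarrow> real" where
  "Gv A P mu g = (\<Sum>s\<in>UNIV. stat_dist (chain A P mu) s *
      (\<Sum>a\<in>joint_actions A. joint_prob mu s a * g s a))"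

definition detp :: "('i \<Rightarrow> 's \<Rightarrow> 'a) \<Rightarrow> 'i \<Rightarrow> 's \<Rightarrow> 'a \<Rightarrow> real" where
  "detp d = (\<lambda>i s a. if a = d i s then 1 else 0)"

lemma jp_nonneg: "mu \<in> joint_policies A \<Longrightarrow> 0 \<le> joint_prob mu s a"
  unfolding joint_prob_def joint_policies_def is_policy_def by (auto intro!: prod_nonneg)

lemma jp_sum:
  fixes A :: "'i::finite \<Rightarrow> 'a::finite set"
  assumes "mu \<in> joint_policies A"
  shows "(\<Sum>a\<in>joint_actions A. joint_prob mu s a) = 1"
proof -
  have "(\<Sum>a\<in>joint_actions A. joint_prob mu s a) = (\<Prod>i\<in>UNIV. \<Sum>x\<in>A i. mu i s x)"
    unfolding joint_actions_PiE joint_prob_def by (rule prod_sum_PiE[symmetric]) auto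
  also have "\<dots> = 1" using assms unfolding joint_policies_def is_policy_def by simp
  finally show ?thesis .
qed

lemma detp_JP: "(\<forall>i s. d i s \<in> A i) \<Longrightarrow> detp d \<in> joint_policies (A :: 'i \<Rightarrow> 'a::finite set)"
  unfolding joint_policies_def is_policy_def detp_def
  by (auto simp: sum.delta)

lemma detp_DP: "(\<forall>i s. d i s \<in> A i) \<Longrightarrow> detp d \<in> deterministic_policies A"
  unfolding deterministic_policies_def detp_def by blast

lemma jp_detp: "joint_prob (detp d) s a = (if a = (\<lambda>i. d i s) then 1 else 0)"
proof (cases "a = (\<lambda>i. d i s)")
  case True then show ?thesis by (simp add: joint_prob_def detp_def)
next
  case False
  then obtain i where "a i \<noteq> d i s" by auto
  then have "(\<Prod>i\<in>UNIV. detp d i s (a i)) = 0"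
    by (intro prod_zero) (auto simp: detp_def)
  then show ?thesis using False by (simp add: joint_prob_def)
qed

lemma sum_detp:
  fixes A :: "'i::finite \<Rightarrow> 'a::finite set"
  assumes "\<forall>i s. d i s \<in> A i"
  shows "(\<Sum>a\<in>joint_actions A. joint_prob (detp d) s a * X a) = X (\<lambda>i. d i s)"
proof -
  have "(\<Sum>a\<in>joint_actions A. joint_prob (detp d) s a * X a)
      = (\<Sum>a\<in>joint_actions A. if a = (\<lambda>i. d i s) then X a else 0)"
    by (rule sum.cong) (auto simp: jp_detp)
  also have "\<dots> = X (\<lambda>i. d i s)"
    using assms by (simp add: sum.delta' joint_actions_def)
  finally show ?thesis .
qed

context
  fixes A :: "'i::finite \<Rightarrow> 'a::finite set"
    and P :: "'s::finite \<Rightarrow> ('i \<Rightarrow> 'a) \<Rightarrow> 's \<Rightarrow> real"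
  assumes A_ne: "\<And>i. A i \<noteq> {}"
    and P_nonneg: "\<And>s a s'. a \<in> joint_actions A \<Longrightarrow> 0 \<le> P s a s'"
    and P_sum: "\<And>s a. a \<in> joint_actions A \<Longrightarrow> (\<Sum>s'\<in>UNIV. P s a s') = 1"
    and irr: "\<And>mu. mu \<in> joint_policies A \<Longrightarrow> irreducible_chain (chain A P mu)"
begin

lemma chain_stoch:
  assumes mu: "mu \<in> joint_policies A"
  shows "stoch (chain A P mu)"
  unfolding stoch_def
proof (intro conjI allI)
  fix s s' show "0 \<le> chain A P mu s s'"
    unfolding chain_def using jp_nonneg[OF mu] P_nonneg by (auto intro!: sum_nonneg)
next
  fix s
  have "(\<Sum>s'\<in>UNIV. chain A P mu s s') = (\<Sum>a\<in>joint_actions A. \<Sum>s'\<in>UNIV. joint_prob mu s a * P s a s')"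
    unfolding chain_def by (rule sum.swap)
  also have "\<dots> = (\<Sum>a\<in>joint_actions A. joint_prob mu s a)"
    by (rule sum.cong) (simp_all add: sum_distrib_left[symmetric] P_sum)
  also have "\<dots> = 1" by (rule jp_sum[OF mu])
  finally show "(\<Sum>s'\<in>UNIV. chain A P mu s s') = 1" .
qed

lemma pi_ok: "mu \<in> joint_policies A \<Longrightarrow> is_stationary (chain A P mu) (stat_dist (chain A P mu))"
  by (rule stat_dist_ok[OF chain_stoch irr])

lemma G_lin:
  assumes mu: "mu \<in> joint_policies A"
  shows "Gv A P mu (\<lambda>s a. x * u s a + y * v s a + z) = x * Gv A P mu u + y * Gv A P mu v + z"
proof -
  let ?p = "stat_dist (chain A P mu)"
  have in1: "(\<Sum>a\<in>joint_actions A. joint_prob mu s a * (x * u s a + y * v s a + z))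
     = x * (\<Sum>a\<in>joint_actions A. joint_prob mu s a * u s a) + y * (\<Sum>a\<in>joint_actions A. joint_prob mu s a * v s a) + z" for s
  proof -
    have "(\<Sum>a\<in>joint_actions A. joint_prob mu s a * (x * u s a + y * v s a + z))
      = (\<Sum>a\<in>joint_actions A. x * (joint_prob mu s a * u s a) + y * (joint_prob mu s a * v s a) + z * joint_prob mu s a)"
      by (rule sum.cong) (simp_all add: algebra_simps)
    also have "\<dots> = x * (\<Sum>a\<in>joint_actions A. joint_prob mu s a * u s a) + y * (\<Sum>a\<in>joint_actions A. joint_prob mu s a * v s a) + z * (\<Sum>a\<in>joint_actions A. joint_prob mu s a)"
      by (simp add: sum.distrib sum_distrib_left)
    finally show ?thesis using jp_sum[OF mu] by simp
  qed
  have "Gv A P mu (\<lambda>s a. x * u s a + y * v s a + z) = (\<Sum>s\<in>UNIV. x * (?p s * (\<Sum>a\<in>joint_actions A. joint_prob mu s a * u s a)) + y * (?p s * (\<Sum>a\<in>joint_actions A. joint_prob mu s a * v s a)) + z * ?p s)"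
    unfolding Gv_def in1 by (rule sum.cong) (simp_all add: algebra_simps)
  also have "\<dots> = x * Gv A P mu u + y * Gv A P mu v + z * (\<Sum>s\<in>UNIV. ?p s)"
    unfolding Gv_def by (simp add: sum.distrib sum_distrib_left)
  also have "\<dots> = x * Gv A P mu u + y * Gv A P mu v + z" using stat_sum[OF pi_ok[OF mu]] by simp
  finally show ?thesis .
qed

lemma G_bellman:
  assumes mu: "mu \<in> joint_policies A"
  shows "Gv A P mu (\<lambda>s a. g s a + (\<Sum>s'\<in>UNIV. P s a s' * h s') - h s - c) = Gv A P mu g - c"
proof -
  let ?p = "stat_dist (chain A P mu)"
  let ?J = "joint_actions A"
  have st: "is_stationary (chain A P mu) ?p" by (rule pi_ok[OF mu])
  have in1: "(\<Sum>a\<in>?J. joint_prob mu s a * (g s a + (\<Sum>s'\<in>UNIV. P s a s' * h s') - h s - c))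
     = (\<Sum>a\<in>?J. joint_prob mu s a * g s a) + (\<Sum>s'\<in>UNIV. chain A P mu s s' * h s') - h s - c" for s
  proof -
    have "(\<Sum>a\<in>?J. joint_prob mu s a * (g s a + (\<Sum>s'\<in>UNIV. P s a s' * h s') - h s - c))
      = (\<Sum>a\<in>?J. joint_prob mu s a * g s a + (\<Sum>s'\<in>UNIV. joint_prob mu s a * P s a s' * h s') - (h s + c) * joint_prob mu s a)"
      by (rule sum.cong) (simp_all add: algebra_simps sum_distrib_left)
    also have "\<dots> = (\<Sum>a\<in>?J. joint_prob mu s a * g s a) + (\<Sum>a\<in>?J. \<Sum>s'\<in>UNIV. joint_prob mu s a * P s a s' * h s') - (h s + c) * (\<Sum>a\<in>?J. joint_prob mu s a)"
      by (simp add: sum.distrib sum_subtractf sum_distrib_left)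
    also have "(\<Sum>a\<in>?J. \<Sum>s'\<in>UNIV. joint_prob mu s a * P s a s' * h s') = (\<Sum>s'\<in>UNIV. chain A P mu s s' * h s')"
      unfolding chain_def by (subst sum.swap) (simp add: sum_distrib_right)
    finally show ?thesis using jp_sum[OF mu] by simp
  qed
  have sw: "(\<Sum>s\<in>UNIV. ?p s * (\<Sum>s'\<in>UNIV. chain A P mu s s' * h s')) = (\<Sum>s'\<in>UNIV. ?p s' * h s')"
  proof -
    have "(\<Sum>s\<in>UNIV. ?p s * (\<Sum>s'\<in>UNIV. chain A P mu s s' * h s')) = (\<Sum>s\<in>UNIV. \<Sum>s'\<in>UNIV. ?p s * chain A P mu s s' * h s')"
      by (simp add: sum_distrib_left mult.assoc)
    also have "\<dots> = (\<Sum>s'\<in>UNIV. \<Sum>s\<in>UNIV. ?p s * chain A P mu s s' * h s')" by (rule sum.swap)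
    also have "\<dots> = (\<Sum>s'\<in>UNIV. (\<Sum>s\<in>UNIV. ?p s * chain A P mu s s') * h s')" by (simp add: sum_distrib_right)
    also have "\<dots> = (\<Sum>s'\<in>UNIV. ?p s' * h s')" using stat_eq[OF st] by metis
    finally show ?thesis .
  qed
  have "Gv A P mu (\<lambda>s a. g s a + (\<Sum>s'\<in>UNIV. P s a s' * h s') - h s - c)
     = (\<Sum>s\<in>UNIV. ?p s * (\<Sum>a\<in>?J. joint_prob mu s a * g s a) + ?p s * (\<Sum>s'\<in>UNIV. chain A P mu s s' * h s') - ?p s * h s - c * ?p s)"
    unfolding Gv_def in1 by (rule sum.cong) (simp_all add: algebra_simps)
  also have "\<dots> = Gv A P mu g + (\<Sum>s\<in>UNIV. ?p s * (\<Sum>s'\<in>UNIV. chain A P mu s s' * h s')) - (\<Sum>s\<in>UNIV. ?p s * h s) - c * (\<Sum>s\<in>UNIV. ?p s)"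
    unfolding Gv_def by (simp add: sum.distrib sum_subtractf sum_distrib_left)
  also have "\<dots> = Gv A P mu g - c" using sw stat_sum[OF st] by simp
  finally show ?thesis .
qed


lemma chain_detp:
  assumes d: "\<forall>i s. d i s \<in> A i"
  shows "chain A P (detp d) s s' = P s (\<lambda>i. d i s) s'"
  unfolding chain_def by (rule sum_detp[OF d])

lemma G_detp:
  assumes d: "\<forall>i s. d i s \<in> A i"
  shows "Gv A P (detp d) g = (\<Sum>s\<in>UNIV. stat_dist (chain A P (detp d)) s * g s (\<lambda>i. d i s))"
  unfolding Gv_def by (simp add: sum_detp[OF d])

lemma mdp_opt:
  "\<exists>d. (\<forall>i s. d i s \<in> A i) \<and> (\<forall>mu\<in>joint_policies A. Gv A P mu g \<le> Gv A P (detp d) g)"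
proof -
  define D where "D = {d :: 'i \<Rightarrow> 's \<Rightarrow> 'a. \<forall>i s. d i s \<in> A i}"
  define F where "F d = Gv A P (detp d) g" for d
  have finD: "finite D" by (rule finite_subset[OF subset_UNIV]) simp
  have neD: "D \<noteq> {}"
  proof -
    have "(SOME x. x \<in> A i) \<in> A i" for i using A_ne[of i] by (simp add: some_in_eq)
    then have "(\<lambda>i s. SOME x. x \<in> A i) \<in> D" unfolding D_def by simp
    then show ?thesis by blast
  qed
  have "Max (F ` D) \<in> F ` D" by (rule Max_in) (use finD neD in auto)
  then obtain d0 where d0max': "Max (F ` D) = F d0" and d0D: "d0 \<in> D" by (rule imageE)
  note d0max = d0max'[symmetric]
  have d0opt: "F d \<le> F d0" if "d \<in> D" for d
    unfolding d0max by (rule Max_ge) (use finD that in auto)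
  have d0: "\<forall>i s. d0 i s \<in> A i" using d0D by (simp add: D_def)
  define Q where "Q = chain A P (detp d0)"
  define p where "p = stat_dist Q"
  define c where "c = F d0"
  define f where "f s = g s (\<lambda>i. d0 i s)" for s
  have JP0: "detp d0 \<in> joint_policies A" by (rule detp_JP[OF d0])
  have stQ: "stoch Q" unfolding Q_def by (rule chain_stoch[OF JP0])
  have irrQ: "irreducible_chain Q" unfolding Q_def by (rule irr[OF JP0])
  have pst: "is_stationary Q p" unfolding p_def Q_def by (rule pi_ok[OF JP0])
  have c_eq: "c = (\<Sum>s\<in>UNIV. p s * f s)"
    unfolding c_def F_def p_def Q_def f_def by (rule G_detp[OF d0])
  have "(\<Sum>s\<in>UNIV. p s * (f s - c)) = (\<Sum>s\<in>UNIV. p s * f s) - c * (\<Sum>s\<in>UNIV. p s)"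
    by (simp add: right_diff_distrib sum_subtractf sum_distrib_left mult.commute)
  also have "\<dots> = 0" using c_eq stat_sum[OF pst] by simp
  finally have y0: "(\<Sum>s\<in>UNIV. p s * (f s - c)) = 0" .
  obtain h where h: "\<forall>s. h s = (f s - c) + (\<Sum>s'\<in>UNIV. Q s s' * h s')"
    using poisson[OF stQ irrQ pst y0] by blast
  define B where "B s a = g s a + (\<Sum>s'\<in>UNIV. P s a s' * h s') - h s - c" for s a
  have B0: "B s (\<lambda>i. d0 i s) = 0" for s
  proof -
    have "(\<Sum>s'\<in>UNIV. P s (\<lambda>i. d0 i s) s' * h s') = (\<Sum>s'\<in>UNIV. Q s s' * h s')"
      unfolding Q_def by (simp add: chain_detp[OF d0])
    then show ?thesis using h[rule_format, of s] by (simp add: B_def f_def)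
  qed
  have bell: "B s a \<le> 0" if a: "a \<in> joint_actions A" for s a
  proof (rule ccontr)
    assume "\<not> B s a \<le> 0"
    then have pos: "B s a > 0" by simp
    define d1 where "d1 i t = (if t = s then a i else d0 i t)" for i t
    have d1: "\<forall>i t. d1 i t \<in> A i" using d0 a by (simp add: d1_def joint_actions_def)
    have JP1: "detp d1 \<in> joint_policies A" by (rule detp_JP[OF d1])
    let ?p1 = "stat_dist (chain A P (detp d1))"
    have p1pos: "?p1 s > 0"
      by (rule stationary_pos[OF chain_stoch[OF JP1] irr[OF JP1] pi_ok[OF JP1]])
    have "F d1 - c = Gv A P (detp d1) B"
      unfolding F_def B_def by (rule G_bellman[OF JP1, symmetric])
    also have "\<dots> = (\<Sum>t\<in>UNIV. ?p1 t * B t (\<lambda>i. d1 i t))" by (rule G_detp[OF d1])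
    also have "\<dots> = (\<Sum>t\<in>UNIV. if t = s then ?p1 s * B s a else 0)"
    proof (rule sum.cong)
      fix t :: 's assume "t \<in> UNIV"
      show "?p1 t * B t (\<lambda>i. d1 i t) = (if t = s then ?p1 s * B s a else 0)"
      proof (cases "t = s")
        case True then show ?thesis by (simp add: d1_def)
      next
        case False
        then have "(\<lambda>i. d1 i t) = (\<lambda>i. d0 i t)" by (simp add: d1_def)
        then show ?thesis using False B0[of t] by simp
      qed
    qed simp
    also have "\<dots> = ?p1 s * B s a" by simp
    finally have "F d1 - c > 0" using p1pos pos by simp
    moreover have "F d1 \<le> c" unfolding c_def by (rule d0opt) (use d1 in \<open>simp add: D_def\<close>)
    ultimately show False by simp
  qed
  have "Gv A P mu g \<le> Gv A P (detp d0) g" if mu: "mu \<in> joint_policies A" for mu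
  proof -
    have "Gv A P mu g - c = Gv A P mu B"
      unfolding B_def by (rule G_bellman[OF mu, symmetric])
    also have "\<dots> \<le> 0" unfolding Gv_def
      using stat_nonneg[OF pi_ok[OF mu]] jp_nonneg[OF mu] bell
      by (auto intro!: sum_nonpos mult_nonneg_nonpos)
    finally show ?thesis by (simp add: c_def F_def)
  qed
  then show ?thesis using d0 by blast
qed


lemma G_mv:
  assumes mu: "mu \<in> joint_policies A"
  shows "Gv A P mu (\<lambda>s a. r s a - beta * (r s a - lam)\<^sup>2)
       = mv_objective beta A P r mu - beta * (avg_reward A P r mu - lam)\<^sup>2"
proof -
  define e where "e = avg_reward A P r mu"
  have e_eq: "e = Gv A P mu r" unfolding e_def avg_reward_def Gv_def ..
  have z_eq: "avg_variance A P r mu = Gv A P mu (\<lambda>s a. (r s a - e)\<^sup>2)"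
    unfolding e_def avg_variance_def Gv_def ..
  have pw: "(\<lambda>s a. r s a - beta * (r s a - lam)\<^sup>2)
      = (\<lambda>s a. (1 - 2*beta*(e-lam)) * r s a + (-beta) * (r s a - e)\<^sup>2 + (2*beta*(e-lam)*e - beta*(e-lam)\<^sup>2))"
    by (intro ext) (simp add: power2_eq_square algebra_simps)
  have "Gv A P mu (\<lambda>s a. r s a - beta * (r s a - lam)\<^sup>2)
      = (1 - 2*beta*(e-lam)) * Gv A P mu r + (-beta) * Gv A P mu (\<lambda>s a. (r s a - e)\<^sup>2) + (2*beta*(e-lam)*e - beta*(e-lam)\<^sup>2)"
    unfolding pw by (rule G_lin[OF mu])
  also have "\<dots> = mv_objective beta A P r mu - beta * (e - lam)\<^sup>2"
    unfolding mv_objective_def z_eq e_eq[symmetric] e_def[symmetric]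
    by (simp add: power2_eq_square algebra_simps)
  finally show ?thesis by (simp add: e_def)
qed

end


theorem theorem1:
  fixes A :: "'i::finite \<Rightarrow> 'a::finite set"
    and P :: "'s::finite \<Rightarrow> ('i \<Rightarrow> 'a) \<Rightarrow> 's \<Rightarrow> real"
    and r :: "'s \<Rightarrow> ('i \<Rightarrow> 'a) \<Rightarrow> real"
    and beta :: real
  assumes A_nonempty: "\<And>i. A i \<noteq> {}"
    and P_nonneg: "\<And>s a s'. a \<in> joint_actions A \<Longrightarrow> 0 \<le> P s a s'"
    and P_sum: "\<And>s a. a \<in> joint_actions A \<Longrightarrow> (\<Sum>s'\<in>UNIV. P s a s') = 1"
    and ergodic: "\<And>mu. mu \<in> joint_policies A \<Longrightarrow> ergodic_chain (chain A P mu)"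
    and beta_nonneg: "0 \<le> beta"
  shows "\<exists>mu_star \<in> deterministic_policies A.
           mu_star \<in> joint_policies A \<and>
           (\<forall>mu \<in> joint_policies A. mv_objective beta A P r mu \<le> mv_objective beta A P r mu_star) \<and>
           (\<forall>i. \<forall>nu. is_policy (A i) nu \<longrightarrow>
              mv_objective beta A P r (mu_star(i := nu)) \<le> mv_objective beta A P r mu_star)"
proof -
  have irr: "\<And>mu. mu \<in> joint_policies A \<Longrightarrow> irreducible_chain (chain A P mu)"
    using ergodic unfolding ergodic_chain_def by blast
  have opt: "\<exists>d. (\<forall>i s. d i s \<in> A i) \<and> (\<forall>mu\<in>joint_policies A. Gv A P mu g \<le> Gv A P (detp d) g)" for g
    using mdp_opt[of A P g] A_nonempty P_nonneg P_sum irr by blast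
  have gmv: "Gv A P mu (\<lambda>s a. r' s a - b * (r' s a - lam)\<^sup>2) = mv_objective b A P r' mu - b * (avg_reward A P r' mu - lam)\<^sup>2"
    if "mu \<in> joint_policies A" for mu r' b lam
    using G_mv[of A P mu r' b lam] A_nonempty P_nonneg P_sum irr that by blast
  define D where "D = {d :: 'i \<Rightarrow> 's \<Rightarrow> 'a. \<forall>i s. d i s \<in> A i}"
  define F where "F d = mv_objective beta A P r (detp d)" for d
  have finD: "finite D" by (rule finite_subset[OF subset_UNIV]) simp
  have neD: "D \<noteq> {}"
  proof -
    have "(SOME x. x \<in> A i) \<in> A i" for i using A_nonempty[of i] by (simp add: some_in_eq)
    then have "(\<lambda>i s. SOME x. x \<in> A i) \<in> D" unfolding D_def by simp
    then show ?thesis by blast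
  qed
  have "Max (F ` D) \<in> F ` D" by (rule Max_in) (use finD neD in auto)
  then obtain d0 where d0max': "Max (F ` D) = F d0" and d0D: "d0 \<in> D" by (rule imageE)
  note d0max = d0max'[symmetric]
  have d0opt: "F d \<le> F d0" if "d \<in> D" for d
    unfolding d0max by (rule Max_ge) (use finD that in auto)
  have d0: "\<forall>i s. d0 i s \<in> A i" using d0D by (simp add: D_def)
  have JP0: "detp d0 \<in> joint_policies A" by (rule detp_JP[OF d0])
  have best: "mv_objective beta A P r mu \<le> mv_objective beta A P r (detp d0)"
    if mu: "mu \<in> joint_policies A" for mu
  proof -
    define e where "e = avg_reward A P r mu"
    define g where "g s a = r s a - beta * (r s a - e)\<^sup>2" for s a
    obtain d where d: "\<forall>i s. d i s \<in> A i"
      and dopt: "\<forall>mu\<in>joint_policies A. Gv A P mu g \<le> Gv A P (detp d) g"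
      using opt by blast
    have JPd: "detp d \<in> joint_policies A" by (rule detp_JP[OF d])
    have "mv_objective beta A P r mu = Gv A P mu g"
      unfolding g_def using gmv[OF mu, of r beta e] by (simp add: e_def)
    also have "\<dots> \<le> Gv A P (detp d) g" using dopt mu by blast
    also have "\<dots> = mv_objective beta A P r (detp d) - beta * (avg_reward A P r (detp d) - e)\<^sup>2"
      unfolding g_def by (rule gmv[OF JPd])
    also have "\<dots> \<le> mv_objective beta A P r (detp d)"
      using beta_nonneg by simp
    also have "\<dots> \<le> mv_objective beta A P r (detp d0)"
      using d0opt[of d] d by (simp add: F_def D_def)
    finally show ?thesis .
  qed
  have nash: "mv_objective beta A P r ((detp d0)(i := nu)) \<le> mv_objective beta A P r (detp d0)"
    if nu: "is_policy (A i) nu" for i nu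
  proof -
    have "(detp d0)(i := nu) \<in> joint_policies A"
      using JP0 nu unfolding joint_policies_def by auto
    then show ?thesis by (rule best)
  qed
  show ?thesis
    using detp_DP[OF d0] JP0 best nash by blast
qed

end
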